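(* Let $G$ be a connected graph with vertex set $\{v_1,\dots,v_n\}$ and let $G^+$ be obtained from $G$ by adding new vertices $v_1^+,\dots,v_n^+$ and edges $v_iv_i^+$ ($i=1,\dots,n$). Let $Q$ be a clique separator of $G^+$ and let $M$ be the $Q$-attachedness graph of $G^+$. Then $M$ has no full antipodal triangle and no induced copy of $W^{(0)}_{2k+1}$ for any $k\ge 1$ if and only if $M$ has no induced copy of $W^{(0)}_{2k+1}$ for any $k\ge 1$.
   Context: Graphs are finite and simple. A clique is an inclusion-maximal set of pairwise adjacent vertices. For a connected graph $X$, a clique $Q$ of $X$ is a clique separator if $X-Q$ has at least two connected components; if their vertex sets are $V_1,\dots,V_s$, put $\gamma_i=X[V_i\cup Q]$ and $\Gamma_Q=\{\gamma_1,\dots,\gamma_s\}$. A relevant clique of $\gamma\in\Gamma_Q$ is a clique $K$ of the graph $\gamma$ with $K\cap Q\neq\emptyset$ and $K\neq Q$. An element $\gamma$ is a neighboring subgraph of a vertex $v$ if $v$ belongs to some relevant clique of $\gamma$; a set $W\subseteq\Gamma_Q$ is neighboring if there is $v\in Q$ such that every member of $W$ is a neighboring subgraph of $v$. Relations on $\Gamma_Q$: attachedness $\gamma\bowtie\gamma'$ iff there are relevant cliques $K$ of $\gamma$ and $K'$ of $\gamma'$ with $K\cap K'\cap Q\neq\emptyset$; dominance $\gamma\le\gamma'$ iff $\gamma\bowtie\gamma'$ and, for each relevant clique $K'$ of $\gamma'$, either $K\cap Q\subseteq K'\cap Q$ for every relevant clique $K$ of $\gamma$, or $K\cap K'\cap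 Q=\emptyset$ for every relevant clique $K$ of $\gamma$; antipodality $\gamma\leftrightarrow\gamma'$ iff there are relevant cliques $K$ of $\gamma$ and $K'$ of $\gamma'$ with $K\cap K'\cap Q\neq\emptyset$ and $K\cap Q$, $K'\cap Q$ inclusion-wise incomparable. Dominance is a preorder; by standing convention, elements $\gamma,\gamma'$ with $\gamma\le\gamma'$ and $\gamma'\le\gamma$ are identified (attachedness, antipodality and being neighboring are compatible with this identification). The $Q$-attachedness graph $M$ has vertex set $\Gamma_Q$ and an edge $\gamma\gamma'$ for each pair of distinct attached elements; it is 2-edge-colored: the edge is antipodal if $\gamma\leftrightarrow\gamma'$ and a dominance edge otherwise (then $\gamma\le\gamma'$ or $\gamma'\le\gamma$). A triangle of $M$ is full if its vertex set is a neighboring set; a full antipodal triangle is a full triangle all of whose edges are antipodal. $W^{(0)}_{2k+1}$ ($k\ge1$) is the 2-edge-colored wheel with hub $c$ and rim vertices $x_1,\dots,x_{2k+1}$, rim edges $x_ix_{i+1}$ (indices mod $2k+1$) antipodal and all spokes $cx_i$ dominance edges. An induced copy of a 2-edge-colored graph $F$ in $M$ is an injective map from $V(F)$ to $V(M)$ such that two vertices are adjacent in $F$ iff their images are adjacent in $M$, with the same edge color. *)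

theory Defs
  imports Main
begin

(* Every notion below only looks at E between vertices of the given vertex set,
   so "induced subgraph X[S]" is represented by the pair (S, E). *)

definition pw_adj :: "('v \<Rightarrow> 'v \<Rightarrow> bool) \<Rightarrow> 'v set \<Rightarrow> bool" where
  "pw_adj E K \<longleftrightarrow> (\<forall>x\<in>K. \<forall>y\<in>K. x \<noteq> y \<longrightarrow> E x y)"

definition is_clique :: "'v set \<Rightarrow> ('v \<Rightarrow> 'v \<Rightarrow> bool) \<Rightarrow> 'v set \<Rightarrow> bool" where
  "is_clique V E K \<longleftrightarrow> K \<subseteq> V \<and> pw_adj E K \<and>
     (\<forall>K'. K \<subseteq> K' \<and> K' \<subseteq> V \<and> pw_adj E K' \<longrightarrow> K' = K)"

definition reach :: "'v set \<Rightarrow> ('v \<Rightarrow> 'v \<Rightarrow> bool) \<Rightarrow> 'v \<Rightarrow> 'v \<Rightarrow> bool" where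
  "reach V E = (\<lambda>x y. x \<in> V \<and> y \<in> V \<and> E x y)\<^sup>*\<^sup>*"

definition connected_graph :: "'v set \<Rightarrow> ('v \<Rightarrow> 'v \<Rightarrow> bool) \<Rightarrow> bool" where
  "connected_graph V E \<longleftrightarrow> V \<noteq> {} \<and> (\<forall>x\<in>V. \<forall>y\<in>V. reach V E x y)"

definition components :: "'v set \<Rightarrow> ('v \<Rightarrow> 'v \<Rightarrow> bool) \<Rightarrow> 'v set set" where
  "components V E = {C. \<exists>x\<in>V. C = {y \<in> V. reach V E x y}}"

definition clique_separator :: "'v set \<Rightarrow> ('v \<Rightarrow> 'v \<Rightarrow> bool) \<Rightarrow> 'v set \<Rightarrow> bool" where
  "clique_separator V E Q \<longleftrightarrow> connected_graph V E \<and> is_clique V E Q \<and>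
     (\<exists>C1\<in>components (V - Q) E. \<exists>C2\<in>components (V - Q) E. C1 \<noteq> C2)"

(* Gamma_Q: an element gamma_i = X[V_i \<union> Q] is represented by the component V_i *)
definition Gamma :: "'v set \<Rightarrow> ('v \<Rightarrow> 'v \<Rightarrow> bool) \<Rightarrow> 'v set \<Rightarrow> 'v set set" where
  "Gamma V E Q = components (V - Q) E"

definition relevant :: "('v \<Rightarrow> 'v \<Rightarrow> bool) \<Rightarrow> 'v set \<Rightarrow> 'v set \<Rightarrow> 'v set \<Rightarrow> bool" where
  "relevant E Q C K \<longleftrightarrow> is_clique (C \<union> Q) E K \<and> K \<inter> Q \<noteq> {} \<and> K \<noteq> Q"

definition neighboring_sub :: "('v \<Rightarrow> 'v \<Rightarrow> bool) \<Rightarrow> 'v set \<Rightarrow> 'v set \<Rightarrow> 'v \<Rightarrow> bool" where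
  "neighboring_sub E Q C v \<longleftrightarrow> (\<exists>K. relevant E Q C K \<and> v \<in> K)"

definition attached :: "('v \<Rightarrow> 'v \<Rightarrow> bool) \<Rightarrow> 'v set \<Rightarrow> 'v set \<Rightarrow> 'v set \<Rightarrow> bool" where
  "attached E Q C C' \<longleftrightarrow> (\<exists>K K'. relevant E Q C K \<and> relevant E Q C' K' \<and> K \<inter> K' \<inter> Q \<noteq> {})"

definition dominated :: "('v \<Rightarrow> 'v \<Rightarrow> bool) \<Rightarrow> 'v set \<Rightarrow> 'v set \<Rightarrow> 'v set \<Rightarrow> bool" where
  "dominated E Q C C' \<longleftrightarrow> attached E Q C C' \<and>
     (\<forall>K'. relevant E Q C' K' \<longrightarrow>
        (\<forall>K. relevant E Q C K \<longrightarrow> K \<inter> Q \<subseteq> K' \<inter> Q) \<or>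
        (\<forall>K. relevant E Q C K \<longrightarrow> K \<inter> K' \<inter> Q = {}))"

definition antipodal :: "('v \<Rightarrow> 'v \<Rightarrow> bool) \<Rightarrow> 'v set \<Rightarrow> 'v set \<Rightarrow> 'v set \<Rightarrow> bool" where
  "antipodal E Q C C' \<longleftrightarrow> (\<exists>K K'. relevant E Q C K \<and> relevant E Q C' K' \<and>
     K \<inter> K' \<inter> Q \<noteq> {} \<and> \<not> (K \<inter> Q \<subseteq> K' \<inter> Q) \<and> \<not> (K' \<inter> Q \<subseteq> K \<inter> Q))"

(* identification of mutually dominating elements: vertices of M are the classes *)
definition dom_class :: "'v set \<Rightarrow> ('v \<Rightarrow> 'v \<Rightarrow> bool) \<Rightarrow> 'v set \<Rightarrow> 'v set \<Rightarrow> 'v set set" where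
  "dom_class V E Q C = {C' \<in> Gamma V E Q. C' = C \<or> (dominated E Q C C' \<and> dominated E Q C' C)}"

definition M_verts :: "'v set \<Rightarrow> ('v \<Rightarrow> 'v \<Rightarrow> bool) \<Rightarrow> 'v set \<Rightarrow> 'v set set set" where
  "M_verts V E Q = dom_class V E Q ` Gamma V E Q"

datatype ecolor = Antipodal | Dominance

definition M_edge :: "('v \<Rightarrow> 'v \<Rightarrow> bool) \<Rightarrow> 'v set \<Rightarrow> 'v set set \<Rightarrow> 'v set set \<Rightarrow> ecolor option" where
  "M_edge E Q A B =
     (if A \<noteq> B \<and> (\<exists>C\<in>A. \<exists>C'\<in>B. attached E Q C C')
      then Some (if (\<exists>C\<in>A. \<exists>C'\<in>B. antipodal E Q C C') then Antipodal else Dominance)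
      else None)"

definition neighboring_set :: "('v \<Rightarrow> 'v \<Rightarrow> bool) \<Rightarrow> 'v set \<Rightarrow> 'v set set set \<Rightarrow> bool" where
  "neighboring_set E Q W \<longleftrightarrow> (\<exists>v\<in>Q. \<forall>A\<in>W. \<exists>C\<in>A. neighboring_sub E Q C v)"

definition has_full_antipodal_triangle :: "'v set \<Rightarrow> ('v \<Rightarrow> 'v \<Rightarrow> bool) \<Rightarrow> 'v set \<Rightarrow> bool" where
  "has_full_antipodal_triangle V E Q \<longleftrightarrow>
     (\<exists>A\<in>M_verts V E Q. \<exists>B\<in>M_verts V E Q. \<exists>D\<in>M_verts V E Q.
        A \<noteq> B \<and> B \<noteq> D \<and> A \<noteq> D \<and>
        M_edge E Q A B = Some Antipodal \<and> M_edge E Q B D = Some Antipodal \<and>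
        M_edge E Q A D = Some Antipodal \<and> neighboring_set E Q {A, B, D})"

(* W^(0)_{2k+1}: rim vertices 0..2k, hub 2k+1 *)
definition wheel_verts :: "nat \<Rightarrow> nat set" where
  "wheel_verts k = {0..2*k+1}"

definition wheel_edge :: "nat \<Rightarrow> nat \<Rightarrow> nat \<Rightarrow> ecolor option" where
  "wheel_edge k i j =
     (let n = 2*k+1 in
      if i = j then None
      else if i = n \<or> j = n then Some Dominance
      else if j = (i + 1) mod n \<or> i = (j + 1) mod n then Some Antipodal
      else None)"

definition has_induced_wheel :: "'v set \<Rightarrow> ('v \<Rightarrow> 'v \<Rightarrow> bool) \<Rightarrow> 'v set \<Rightarrow> nat \<Rightarrow> bool" where
  "has_induced_wheel V E Q k \<longleftrightarrow>
     (\<exists>f. inj_on f (wheel_verts k) \<and> f ` wheel_verts k \<subseteq> M_verts V E Q \<and>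
        (\<forall>i\<in>wheel_verts k. \<forall>j\<in>wheel_verts k. i \<noteq> j \<longrightarrow>
            M_edge E Q (f i) (f j) = wheel_edge k i j))"

(* G^+: Inl v = v, Inr v = v^+ *)
definition plus_verts :: "'a set \<Rightarrow> ('a + 'a) set" where
  "plus_verts V = Inl ` V \<union> Inr ` V"

fun plus_edge :: "('a \<Rightarrow> 'a \<Rightarrow> bool) \<Rightarrow> 'a + 'a \<Rightarrow> 'a + 'a \<Rightarrow> bool" where
  "plus_edge E (Inl u) (Inl w) = E u w"
| "plus_edge E (Inl u) (Inr w) = (u = w)"
| "plus_edge E (Inr u) (Inl w) = (u = w)"
| "plus_edge E (Inr u) (Inr w) = False"

end

theory Submission
  imports Defs
begin

lemma attached_sym: "attached R Q C C' = attached R Q C' C"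
  unfolding attached_def by blast

lemma antipodal_sym: "antipodal R Q C C' = antipodal R Q C' C"
  unfolding antipodal_def by blast

lemma M_edge_sym: "M_edge R Q X Y = M_edge R Q Y X"
proof -
  have a: "(\<exists>C\<in>X. \<exists>C'\<in>Y. attached R Q C C') = (\<exists>C\<in>Y. \<exists>C'\<in>X. attached R Q C C')"
    using attached_sym by blast
  have b: "(\<exists>C\<in>X. \<exists>C'\<in>Y. antipodal R Q C C') = (\<exists>C\<in>Y. \<exists>C'\<in>X. antipodal R Q C C')"
    using antipodal_sym by blast
  show ?thesis unfolding M_edge_def a b by auto
qed

lemma small_noant:
  assumes "\<forall>K. relevant R Q C K \<longrightarrow> K \<inter> Q \<subseteq> {v}"
  shows "\<not> antipodal R Q C X" "\<not> antipodal R Q X C"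
  using assms unfolding antipodal_def by blast+

lemma degenerate_noant:
  assumes cl: "is_clique W R Q" and sub: "Q \<subseteq> {x, y}" and C: "C \<subseteq> W" and C': "C' \<subseteq> W"
  shows "\<not> antipodal R Q C C'"
proof
  assume "antipodal R Q C C'"
  then obtain K K' where K: "relevant R Q C K" and K': "relevant R Q C' K'"
    and i: "K \<inter> K' \<inter> Q \<noteq> {}" "\<not> (K \<inter> Q \<subseteq> K' \<inter> Q)" "\<not> (K' \<inter> Q \<subseteq> K \<inter> Q)"
    unfolding antipodal_def by blast
  have nq: "\<not> Q \<subseteq> L" if "relevant R Q D L" "D \<subseteq> W" for D L
  proof
    assume "Q \<subseteq> L"
    have L1: "L \<subseteq> D \<union> Q" "pw_adj R L" using that(1) by (simp_all add: relevant_def is_clique_def)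
    have "Q \<subseteq> W" using cl by (simp add: is_clique_def)
    then have "L \<subseteq> W" using L1 that(2) by blast
    moreover note \<open>Q \<subseteq> L\<close> L1(2)
    ultimately have "L = Q" using cl unfolding is_clique_def by blast
    then show False using that unfolding relevant_def by auto
  qed
  have "\<not> Q \<subseteq> K" "\<not> Q \<subseteq> K'" using nq K K' C C' by auto
  then show False using i sub by blast
qed

lemma plus_edge_Inr1: "plus_edge E (Inr a) z \<longleftrightarrow> z = Inl a"
  by (cases z) auto

lemma plus_edge_Inr2: "plus_edge E z (Inr a) \<longleftrightarrow> z = Inl a"
  by (cases z) auto

lemma relP:
  assumes pw: "pw_adj (plus_edge E) Q" and nq: "Inr a \<notin> Q"
    and K: "relevant (plus_edge E) Q {Inr a} K"
  shows "K \<subseteq> {Inl a, Inr a}"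
proof (cases "Inr a \<in> K")
  case True
  have "pw_adj (plus_edge E) K" using K unfolding relevant_def is_clique_def by auto
  then show ?thesis using True unfolding pw_adj_def by (metis insertCI plus_edge_Inr1 subsetI)
next
  case False
  have "K \<subseteq> Q" using K False unfolding relevant_def is_clique_def by auto
  then have "Q = K" using K pw unfolding relevant_def is_clique_def by blast
  then show ?thesis using K unfolding relevant_def by auto
qed

lemma relP0:
  assumes "Inl a \<in> Q" and nq: "Inr a \<notin> Q"
  shows "relevant (plus_edge E) Q {Inr a} {Inl a, Inr a}"
  unfolding relevant_def is_clique_def
proof (intro conjI allI impI)
  show "{Inl a, Inr a} \<subseteq> {Inr a} \<union> Q" using assms by auto
  show "pw_adj (plus_edge E) {Inl a, Inr a}" unfolding pw_adj_def by auto
  fix K' assume h: "{Inl a, Inr a} \<subseteq> K' \<and> K' \<subseteq> {Inr a} \<union> Q \<and> pw_adj (plus_edge E) K'"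
  have "x \<in> {Inl a, Inr a}" if "x \<in> K'" for x
  proof (cases "x = Inr a")
    case False
    have pa: "\<forall>x\<in>K'. \<forall>y\<in>K'. x \<noteq> y \<longrightarrow> plus_edge E x y" using h by (simp add: pw_adj_def)
    have IK: "Inr a \<in> K'" using h by simp
    have "plus_edge E (Inr a) x" using bspec[OF bspec[OF pa IK] that] False by simp
    then show ?thesis by (simp add: plus_edge_Inr1)
  qed simp
  then show "K' = {Inl a, Inr a}" using h by blast
next
  show "{Inl a, Inr a} \<inter> Q \<noteq> {}" using assms by auto
  show "{Inl a, Inr a} \<noteq> Q" using assms by auto
qed

lemma reach_Inr:
  assumes "reach U (plus_edge E) (Inr a) y" and "Inl a \<notin> U"
  shows "y = Inr a"
proof -
  have "(\<lambda>x y. x \<in> U \<and> y \<in> U \<and> plus_edge E x y)\<^sup>*\<^sup>* (Inr a) y"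
    using assms(1) unfolding reach_def by simp
  then show ?thesis
  proof (induction rule: rtranclp_induct)
    case base then show ?case by simp
  next
    case (step y z) then show ?case using assms(2) by (auto simp: plus_edge_Inr1)
  qed
qed

lemma wheel1: "wheel_verts 1 = {0,1,2,3}"
  unfolding wheel_verts_def by auto

theorem lemma4p3:
  fixes V :: "'a set" and E :: "'a \<Rightarrow> 'a \<Rightarrow> bool" and Q :: "('a + 'a) set"
  assumes "finite V"
    and "\<And>u w. E u w \<Longrightarrow> E w u"
    and "\<And>u. \<not> E u u"
    and "connected_graph V E"
    and "clique_separator (plus_verts V) (plus_edge E) Q"
  shows "(\<not> has_full_antipodal_triangle (plus_verts V) (plus_edge E) Q \<and>
          \<not> (\<exists>k\<ge>1. has_induced_wheel (plus_verts V) (plus_edge E) Q k))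
         \<longleftrightarrow> \<not> (\<exists>k\<ge>1. has_induced_wheel (plus_verts V) (plus_edge E) Q k)"
proof -
  let ?W = "plus_verts V" and ?R = "plus_edge E"
  have cl: "is_clique ?W ?R Q" using assms(5) by (simp add: clique_separator_def)
  have pwQ: "pw_adj ?R Q" using cl unfolding is_clique_def by auto
  have QW: "Q \<subseteq> ?W" using cl unfolding is_clique_def by auto
  have gam: "\<And>X C. X \<in> M_verts ?W ?R Q \<Longrightarrow> C \<in> X \<Longrightarrow> C \<subseteq> ?W - Q"
    by (auto simp: M_verts_def dom_class_def Gamma_def components_def)
  have antmem: "\<And>X Y. M_edge ?R Q X Y = Some Antipodal \<Longrightarrow> \<exists>C\<in>X. \<exists>C'\<in>Y. antipodal ?R Q C C'"
    by (auto simp: M_edge_def split: if_splits)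
  have "has_induced_wheel ?W ?R Q 1" if tri: "has_full_antipodal_triangle ?W ?R Q"
  proof -
    obtain A B D v where AM: "A \<in> M_verts ?W ?R Q" and BM: "B \<in> M_verts ?W ?R Q"
      and DM: "D \<in> M_verts ?W ?R Q" and ne: "A \<noteq> B" "B \<noteq> D" "A \<noteq> D"
      and eAB: "M_edge ?R Q A B = Some Antipodal" and eBD: "M_edge ?R Q B D = Some Antipodal"
      and eAD: "M_edge ?R Q A D = Some Antipodal" and vQ: "v \<in> Q"
      and nb: "\<forall>X\<in>{A, B, D}. \<exists>C\<in>X. neighboring_sub ?R Q C v"
      using tri unfolding has_full_antipodal_triangle_def neighboring_set_def
      by (elim bexE conjE) (rule that, assumption+)
    show ?thesis
    proof (cases "\<exists>a. Inr a \<in> Q")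
      case True
      then obtain a where aQ: "Inr a \<in> Q" by blast
      have "Q \<subseteq> {Inl a, Inr a}" using pwQ aQ unfolding pw_adj_def by (metis insertCI plus_edge_Inr1 subsetI)
      moreover obtain C C' where "C \<in> A" "C' \<in> B" "antipodal ?R Q C C'" using antmem[OF eAB] by blast
      moreover have "C \<subseteq> ?W" "C' \<subseteq> ?W" using gam AM BM \<open>C \<in> A\<close> \<open>C' \<in> B\<close> by blast+
      ultimately have False using degenerate_noant[OF cl] by blast
      then show ?thesis ..
    next
      case False
      then obtain a where va: "v = Inl a" using vQ by (cases v) auto
      have nq: "Inr a \<notin> Q" using False by blast
      have aV: "a \<in> V" using QW vQ va unfolding plus_verts_def by auto
      have IW: "Inr a \<in> ?W - Q" using aV nq unfolding plus_verts_def by auto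
      have Pc: "{Inr a} = {y \<in> ?W - Q. reach (?W - Q) ?R (Inr a) y}"
      proof
        show "{Inr a} \<subseteq> {y \<in> ?W - Q. reach (?W - Q) ?R (Inr a) y}"
          using IW unfolding reach_def by auto
        show "{y \<in> ?W - Q. reach (?W - Q) ?R (Inr a) y} \<subseteq> {Inr a}"
          using reach_Inr[of "?W - Q" E a] vQ va by auto
      qed
      have PG: "{Inr a} \<in> Gamma ?W ?R Q"
        unfolding Gamma_def components_def using Pc IW by blast
      define H where "H = dom_class ?W ?R Q {Inr a}"
      have HM: "H \<in> M_verts ?W ?R Q" unfolding H_def M_verts_def using PG by blast
      have PH: "{Inr a} \<in> H" unfolding H_def dom_class_def using PG by blast
      have K0: "relevant ?R Q {Inr a} {Inl a, Inr a}" using relP0[of a Q E] vQ va nq by simp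
      have Psmall: "\<forall>K. relevant ?R Q {Inr a} K \<longrightarrow> K \<inter> Q \<subseteq> {v}"
        using relP[OF pwQ nq] nq va by blast
      have small: "\<forall>K. relevant ?R Q C K \<longrightarrow> K \<inter> Q \<subseteq> {v}" if "C \<in> H" for C
      proof (cases "C = {Inr a}")
        case True then show ?thesis using Psmall by simp
      next
        case False
        then have dm: "dominated ?R Q C {Inr a}" using that unfolding H_def dom_class_def by blast
        then obtain K K'' where "relevant ?R Q C K" "relevant ?R Q {Inr a} K''"
          "K \<inter> K'' \<inter> Q \<noteq> {}" unfolding dominated_def attached_def by blast
        then have vK: "v \<in> K" using Psmall by blast
        have "(\<forall>K. relevant ?R Q C K \<longrightarrow> K \<inter> Q \<subseteq> {Inl a, Inr a} \<inter> Q) \<or>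
              (\<forall>K. relevant ?R Q C K \<longrightarrow> K \<inter> {Inl a, Inr a} \<inter> Q = {})"
          using dm K0 unfolding dominated_def by blast
        moreover have "K \<inter> {Inl a, Inr a} \<inter> Q \<noteq> {}" using vK vQ va by auto
        ultimately show ?thesis using \<open>relevant ?R Q C K\<close> va nq by blast
      qed
      have noant: "\<And>C X. C \<in> H \<Longrightarrow> \<not> antipodal ?R Q C X \<and> \<not> antipodal ?R Q X C"
        using small small_noant by metis
      have hub: "M_edge ?R Q H X = Some Dominance \<and> M_edge ?R Q X H = Some Dominance \<and> H \<noteq> X"
        if X: "X \<in> {A, B, D}" "\<exists>C\<in>X. \<exists>Y. antipodal ?R Q C Y \<or> antipodal ?R Q Y C" for X
      proof -
        have HX: "H \<noteq> X" using X(2) noant by blast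
        obtain C K where "C \<in> X" "relevant ?R Q C K" "v \<in> K"
          using nb X(1) unfolding neighboring_sub_def by blast
        then have "attached ?R Q {Inr a} C" unfolding attached_def using K0 vQ va by blast
        then have "M_edge ?R Q H X = Some Dominance"
          unfolding M_edge_def using HX PH \<open>C \<in> X\<close> noant by auto
        then show ?thesis using HX M_edge_sym by metis
      qed
      obtain C1 C2 where "C1 \<in> A" "C2 \<in> B" "antipodal ?R Q C1 C2" using antmem[OF eAB] by blast
      obtain C3 C4 where "C3 \<in> B" "C4 \<in> D" "antipodal ?R Q C3 C4" using antmem[OF eBD] by blast
      have hA: "M_edge ?R Q H A = Some Dominance \<and> M_edge ?R Q A H = Some Dominance \<and> H \<noteq> A"
        using hub[of A] \<open>C1 \<in> A\<close> \<open>antipodal ?R Q C1 C2\<close> by blast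
      have hB: "M_edge ?R Q H B = Some Dominance \<and> M_edge ?R Q B H = Some Dominance \<and> H \<noteq> B"
        using hub[of B] \<open>C3 \<in> B\<close> \<open>antipodal ?R Q C3 C4\<close> by blast
      have hD: "M_edge ?R Q H D = Some Dominance \<and> M_edge ?R Q D H = Some Dominance \<and> H \<noteq> D"
        using hub[of D] \<open>C4 \<in> D\<close> \<open>antipodal ?R Q C3 C4\<close> by blast
      have sBA: "M_edge ?R Q B A = Some Antipodal" using eAB M_edge_sym by metis
      have sDB: "M_edge ?R Q D B = Some Antipodal" using eBD M_edge_sym by metis
      have sDA: "M_edge ?R Q D A = Some Antipodal" using eAD M_edge_sym by metis
      define f where "f = (\<lambda>i::nat. if i = 0 then A else if i = 1 then B else if i = 2 then D else H)"
      show ?thesis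
        unfolding has_induced_wheel_def wheel1
      proof (intro exI[of _ f] conjI)
        show "inj_on f {0, 1, 2, 3}" using ne hA hB hD unfolding f_def inj_on_def by auto
        show "f ` {0, 1, 2, 3} \<subseteq> M_verts ?W ?R Q" using AM BM DM HM unfolding f_def by auto
        show "\<forall>i\<in>{0, 1, 2, 3}. \<forall>j\<in>{0, 1, 2, 3}. i \<noteq> j \<longrightarrow> M_edge ?R Q (f i) (f j) = wheel_edge 1 i j"
          using hA hB hD eAB eBD eAD sBA sDB sDA unfolding f_def wheel_edge_def Let_def by auto
      qed
    qed
  qed
  then show ?thesis by (meson order_refl)
qed

end
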